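(* Let $(\pi_r)_{r\in\mathbb{N}}$ be periods, let $(K_t)_{t\in\mathbb{N}}$ be the multiperiodic process with periods $(\pi_r)$, and let $W_r:=\inf\{t\in\mathbb{N}:K_t=r\}$. If $r\in\mathbb{N}$ is such that $\pi_i\ge2$ for all $1\le i\le r-1$, then (for every realization of the seeds) $$W_r\le \bar w_r:=\left(\cdots\left(\left(\pi_r\cdot\frac{\pi_{r-1}}{\pi_{r-1}-1}+1\right)\frac{\pi_{r-2}}{\pi_{r-2}-1}+1\right)\cdots\frac{\pi_1}{\pi_1-1}+1\right),$$ i.e. $\bar w_r=v_1$ where $v_r:=\pi_r$ and $v_i:=v_{i+1}\,\pi_i/(\pi_i-1)+1$ for $i=r-1,\dots,1$.
   Context: $\mathbb{N}=\{1,2,3,\dots\}$. Multiperiodic sequence with periods $\pi_r\in\mathbb{N}$ and seeds $\sigma_r\in\{1,\dots,\pi_r\}$: the sequence $(k_t)_{t\in\mathbb{N}}$ with values in $\mathbb{N}\cup\{\infty\}$ such that for each $r$, the subsequence obtained from $(k_t)$ by deleting all tokens $k_t<r$, denoted $(k^{(r)}_t)_{t\in\mathbb{N}}$, satisfies $k^{(r)}_t=r\iff t\equiv\sigma_r\pmod{\pi_r}$; entries left undefined for all $r$ are set to $\infty$. Equivalently: clocks $\phi_r$ start at $\sigma_r$; for each token, scan $r=1,2,\dots$, decrementing each clock with $\phi_r>1$, until the first $r$ with $\phi_r=1$, output that $r$ and reset $\phi_r=\pi_r$. The multiperiodic process with periods $(\pi_r)$ is the random multiperiodic sequence with these periods and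 independent random seeds $\Sigma_r$ uniformly distributed on $\{1,\dots,\pi_r\}$. *)

theory Defs
  imports Complex_Main "HOL-Library.Extended_Nat"
begin

text \<open>Clock formulation of a multiperiodic sequence. Periods \<open>\<pi> r\<close> and clocks
  \<open>\<phi> r\<close> are indexed by \<open>r \<ge> 1\<close>; values at index 0 are irrelevant.\<close>

definition mp_step :: "(nat \<Rightarrow> nat) \<Rightarrow> (nat \<Rightarrow> nat) \<Rightarrow> enat \<times> (nat \<Rightarrow> nat)" where
  "mp_step \<pi> \<phi> =
     (if \<exists>r\<ge>1. \<phi> r = 1 then
        (let k = (LEAST r. 1 \<le> r \<and> \<phi> r = 1) in
          (enat k, \<lambda>r. if 1 \<le> r \<and> r < k then (if \<phi> r > 1 then \<phi> r - 1 else \<phi> r)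
                      else if r = k then \<pi> r else \<phi> r))
      else
        (\<infinity>, \<lambda>r. if 1 \<le> r \<and> \<phi> r > 1 then \<phi> r - 1 else \<phi> r))"

primrec mp_state :: "(nat \<Rightarrow> nat) \<Rightarrow> (nat \<Rightarrow> nat) \<Rightarrow> nat \<Rightarrow> (nat \<Rightarrow> nat)" where
  "mp_state \<pi> \<sigma> 0 = \<sigma>"
| "mp_state \<pi> \<sigma> (Suc n) = snd (mp_step \<pi> (mp_state \<pi> \<sigma> n))"

text \<open>The multiperiodic sequence \<open>k_t\<close>, for \<open>t \<ge> 1\<close> (index 0 is meaningless).\<close>
definition mp_seq :: "(nat \<Rightarrow> nat) \<Rightarrow> (nat \<Rightarrow> nat) \<Rightarrow> nat \<Rightarrow> enat" where
  "mp_seq \<pi> \<sigma> t = fst (mp_step \<pi> (mp_state \<pi> \<sigma> (t - 1)))"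

definition mp_wait :: "(nat \<Rightarrow> nat) \<Rightarrow> (nat \<Rightarrow> nat) \<Rightarrow> nat \<Rightarrow> enat" where
  "mp_wait \<pi> \<sigma> r = (INF t\<in>{t. 1 \<le> t \<and> mp_seq \<pi> \<sigma> t = enat r}. enat t)"

text \<open>\<open>mp_v \<pi> r j = v_{r-j}\<close>, where \<open>v_r = \<pi>_r\<close> and \<open>v_i = v_{i+1} \<pi>_i/(\<pi>_i - 1) + 1\<close>.\<close>
primrec mp_v :: "(nat \<Rightarrow> nat) \<Rightarrow> nat \<Rightarrow> nat \<Rightarrow> real" where
  "mp_v \<pi> r 0 = real (\<pi> r)"
| "mp_v \<pi> r (Suc j) =
     mp_v \<pi> r j * real (\<pi> (r - Suc j)) / (real (\<pi> (r - Suc j)) - 1) + 1"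

definition mp_wbar :: "(nat \<Rightarrow> nat) \<Rightarrow> nat \<Rightarrow> real" where
  "mp_wbar \<pi> r = mp_v \<pi> r (r - 1)"

end

theory Submission
  imports Defs
begin

primrec pot :: "(nat \<Rightarrow> nat) \<Rightarrow> nat \<Rightarrow> nat \<Rightarrow> (nat \<Rightarrow> nat) \<Rightarrow> real" where
  "pot \<pi> r 0 \<phi> = real (\<phi> r)"
| "pot \<pi> r (Suc j) \<phi> = pot \<pi> r j \<phi> + (pot \<pi> r j \<phi> - real (\<phi> (r - Suc j))) / (real (\<pi> (r - Suc j)) - 1) + 1"

lemma pot_local:
  "(\<And>x. r - j \<le> x \<Longrightarrow> x \<le> r \<Longrightarrow> \<phi> x = \<psi> x) \<Longrightarrow> pot \<pi> r j \<phi> = pot \<pi> r j \<psi>"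
proof (induction j)
  case 0
  then show ?case by simp
next
  case (Suc j)
  have "pot \<pi> r j \<phi> = pot \<pi> r j \<psi>" using Suc by simp
  moreover have "\<phi> (r - Suc j) = \<psi> (r - Suc j)" using Suc.prems by simp
  ultimately show ?case by simp
qed

lemma step_facts:
  assumes v: "\<forall>x\<ge>1. 1 \<le> \<phi> x" and x: "1 \<le> x"
  shows "(fst (mp_step \<pi> \<phi>) < enat x \<longrightarrow> snd (mp_step \<pi> \<phi>) x = \<phi> x) \<and>
         (fst (mp_step \<pi> \<phi>) = enat x \<longrightarrow> \<phi> x = 1 \<and> snd (mp_step \<pi> \<phi>) x = \<pi> x) \<and>
         (enat x < fst (mp_step \<pi> \<phi>) \<longrightarrow> 1 < \<phi> x \<and> snd (mp_step \<pi> \<phi>) x = \<phi> x - 1)"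
proof (cases "\<exists>r\<ge>1. \<phi> r = 1")
  case True
  define k where "k = (LEAST r. 1 \<le> r \<and> \<phi> r = 1)"
  have k1: "1 \<le> k \<and> \<phi> k = 1" unfolding k_def using True by (rule LeastI_ex)
  have k2: "\<phi> y \<noteq> 1" if "1 \<le> y" "y < k" for y
    using not_less_Least[of y "\<lambda>r. 1 \<le> r \<and> \<phi> r = 1"] that k_def by auto
  have e: "mp_step \<pi> \<phi> = (enat k, \<lambda>r. if 1 \<le> r \<and> r < k then (if \<phi> r > 1 then \<phi> r - 1 else \<phi> r)
                      else if r = k then \<pi> r else \<phi> r)"
    unfolding mp_step_def if_P[OF True] Let_def k_def[symmetric] by (rule refl)
  have fx: "fst (mp_step \<pi> \<phi>) = enat k" using e by simp
  have sx: "snd (mp_step \<pi> \<phi>) x = (if 1 \<le> x \<and> x < k then (if \<phi> x > 1 then \<phi> x - 1 else \<phi> x)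
                      else if x = k then \<pi> x else \<phi> x)" using e by simp
  have vx: "1 \<le> \<phi> x" using v x by simp
  show ?thesis
  proof (cases "x < k")
    case True
    then have "\<phi> x \<noteq> 1" using k2 x by simp
    then show ?thesis using True vx x unfolding fx sx by simp
  next
    case False
    then show ?thesis using k1 x unfolding fx sx by auto
  qed
next
  case False
  have e: "mp_step \<pi> \<phi> = (\<infinity>, \<lambda>r. if 1 \<le> r \<and> \<phi> r > 1 then \<phi> r - 1 else \<phi> r)"
    unfolding mp_step_def if_not_P[OF False] by (rule refl)
  have "\<phi> x \<noteq> 1" using False x by auto
  then show ?thesis using v x unfolding e by auto
qed

lemma step_ge1:
  "enat 1 \<le> fst (mp_step \<pi> \<phi>)"
proof (cases "\<exists>r\<ge>1. \<phi> r = 1")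
  case True
  define k where "k = (LEAST r. 1 \<le> r \<and> \<phi> r = 1)"
  have k1: "1 \<le> k \<and> \<phi> k = 1" unfolding k_def using True by (rule LeastI_ex)
  have e: "fst (mp_step \<pi> \<phi>) = enat k"
    unfolding mp_step_def if_P[OF True] Let_def k_def[symmetric] by simp
  show ?thesis using k1 e by simp
next
  case False
  then show ?thesis unfolding mp_step_def if_not_P[OF False] by simp
qed

lemma pot_bound:
  assumes valid: "\<forall>x\<ge>1. 1 \<le> \<sigma> x \<and> \<sigma> x \<le> \<pi> x"
    and big: "\<And>i. 1 \<le> i \<Longrightarrow> i \<le> r - 1 \<Longrightarrow> 2 \<le> \<pi> i"
  shows "j < r \<Longrightarrow> pot \<pi> r j \<sigma> \<le> mp_v \<pi> r j"
proof (induction j)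
  case 0
  then show ?case using valid by simp
next
  case (Suc j)
  define i where "i = r - Suc j"
  have i1: "1 \<le> i" "i \<le> r - 1" using Suc.prems i_def by auto
  define p where "p = real (\<pi> i)"
  define c where "c = real (\<sigma> i)"
  define m where "m = pot \<pi> r j \<sigma>"
  define v where "v = mp_v \<pi> r j"
  have p2: "p \<ge> 2" using big[OF i1] p_def by simp
  have c1: "c \<ge> 1" using valid i1 c_def by simp
  have mv: "m \<le> v" using Suc m_def v_def by simp
  have "(m - c)/(p-1) \<le> (m-1)/(p-1)" using p2 c1 by (intro divide_right_mono) auto
  moreover have "m + (m-1)/(p-1) \<le> m*p/(p-1)" using p2 by (simp add: field_simps)
  moreover have "m*p/(p-1) \<le> v*p/(p-1)" using p2 mv
    by (intro divide_right_mono mult_right_mono) auto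
  ultimately have "m + (m - c)/(p-1) + 1 \<le> v * p / (p-1) + 1" by linarith
  then show ?case unfolding m_def v_def p_def c_def i_def by simp
qed

lemma pot_step:
  assumes valid: "\<forall>x\<ge>1. 1 \<le> \<phi> x \<and> \<phi> x \<le> \<pi> x"
    and H: "\<And>x. 1 \<le> x \<Longrightarrow> (k < enat x \<longrightarrow> \<phi>' x = \<phi> x) \<and> (k = enat x \<longrightarrow> \<phi> x = 1 \<and> \<phi>' x = \<pi> x)
              \<and> (enat x < k \<longrightarrow> 1 < \<phi> x \<and> \<phi>' x = \<phi> x - 1)"
    and big: "\<And>i. 1 \<le> i \<Longrightarrow> i \<le> r - 1 \<Longrightarrow> 2 \<le> \<pi> i"
  shows "j < r \<Longrightarrow> 1 \<le> pot \<pi> r j \<phi> \<and>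
     (enat (r - j) \<le> k \<longrightarrow> k \<noteq> enat r \<longrightarrow> pot \<pi> r j \<phi>' \<le> pot \<pi> r j \<phi> - 1)"
proof (induction j)
  case 0
  have r1: "1 \<le> r" using 0 by simp
  have a: "1 \<le> pot \<pi> r 0 \<phi>" using valid r1 by simp
  have "pot \<pi> r 0 \<phi>' \<le> pot \<pi> r 0 \<phi> - 1" if "enat r \<le> k" "k \<noteq> enat r"
  proof -
    have "enat r < k" using that by simp
    then have "1 < \<phi> r \<and> \<phi>' r = \<phi> r - 1" using H[OF r1] by simp
    then show ?thesis by (simp add: of_nat_diff)
  qed
  then show ?case using a by simp
next
  case (Suc j)
  define i where "i = r - Suc j"
  have i1: "1 \<le> i" "i \<le> r - 1" using Suc.prems i_def by auto
  have ri: "r - j = Suc i" using Suc.prems i_def by simp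
  define p where "p = real (\<pi> i)"
  define c where "c = real (\<phi> i)"
  define m where "m = pot \<pi> r j \<phi>"
  define m' where "m' = pot \<pi> r j \<phi>'"
  have p2: "p \<ge> 2" using big[OF i1] p_def by simp
  have c1: "c \<ge> 1" "c \<le> p" using valid i1 c_def p_def by auto
  have IH: "1 \<le> m" "enat (Suc i) \<le> k \<longrightarrow> k \<noteq> enat r \<longrightarrow> m' \<le> m - 1"
    using Suc m_def m'_def ri by auto
  have eq: "pot \<pi> r (Suc j) \<psi> = pot \<pi> r j \<psi> + (pot \<pi> r j \<psi> - real (\<psi> i)) / (p - 1) + 1" for \<psi>
    unfolding i_def p_def by simp
  have "(m - c)/(p-1) \<ge> (1 - p)/(p-1)" using p2 c1 IH by (intro divide_right_mono) auto
  moreover have "(1 - p)/(p-1) = -1" using p2 by (simp add: field_simps)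
  ultimately have A: "1 \<le> m + (m - c)/(p-1) + 1 " using IH by linarith
  have B: "m' + (m' - real (\<phi>' i))/(p-1) + 1 \<le> m + (m - c)/(p-1) + 1 - 1"
    if k1: "enat i \<le> k" and k2: "k \<noteq> enat r"
  proof (cases "k = enat i")
    case True
    have "m' = m" unfolding m'_def m_def
    proof (rule pot_local)
      fix x assume "r - j \<le> x" "x \<le> r"
      then have "1 \<le> x" "k < enat x" using ri True by auto
      then show "\<phi>' x = \<phi> x" using H by blast
    qed
    moreover have "c = 1" "real (\<phi>' i) = p" using H[OF i1(1)] True c_def p_def by auto
    ultimately show ?thesis using p2 by (simp add: field_simps)
  next
    case False
    then have "enat i < k" using k1 by simp
    then have h: "1 < \<phi> i \<and> \<phi>' i = \<phi> i - 1" using H[OF i1(1)] by simp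
    then have c': "real (\<phi>' i) = c - 1" using c_def by (simp add: of_nat_diff)
    have "enat (Suc i) \<le> k" using \<open>enat i < k\<close> by (simp add: Suc_ile_eq)
    then have mm: "m' \<le> m - 1" using IH k2 by simp
    have "(m' - (c - 1))/(p-1) \<le> (m - c)/(p-1)" using p2 mm by (intro divide_right_mono) auto
    then show ?thesis using mm unfolding c' by linarith
  qed
  have ij: "r - Suc j = i" using i_def by simp
  show ?case unfolding eq ij using A B unfolding m_def m'_def c_def by auto
qed

lemma enat_Inf_Least:
  assumes "n \<in> S" "\<And>t. t \<in> S \<Longrightarrow> n \<le> t"
  shows "(INF t\<in>S. enat t) = enat n"
proof (rule antisym)
  show "(INF t\<in>S. enat t) \<le> enat n" using assms(1) by (rule INF_lower)
  show "enat n \<le> (INF t\<in>S. enat t)" using assms(2) by (intro INF_greatest) simp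
qed

theorem theorem5:
  fixes \<pi> \<sigma> :: "nat \<Rightarrow> nat" and r :: nat
  assumes periods: "\<And>i. 1 \<le> i \<Longrightarrow> 1 \<le> \<pi> i"
    and seeds: "\<And>i. 1 \<le> i \<Longrightarrow> 1 \<le> \<sigma> i \<and> \<sigma> i \<le> \<pi> i"
    and r: "1 \<le> r"
    and big: "\<And>i. 1 \<le> i \<Longrightarrow> i \<le> r - 1 \<Longrightarrow> 2 \<le> \<pi> i"
  shows "\<exists>n. mp_wait \<pi> \<sigma> r = enat n \<and> real n \<le> mp_wbar \<pi> r"
proof -
  define st where "st = mp_state \<pi> \<sigma>"
  have valid: "\<forall>x\<ge>1. 1 \<le> st n x \<and> st n x \<le> \<pi> x" for n
  proof (induction n)
    case 0
    then show ?case using seeds st_def by simp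
  next
    case (Suc n)
    show ?case
    proof (intro allI impI)
      fix x :: nat assume x: "1 \<le> x"
      have v: "\<forall>x\<ge>1. 1 \<le> st n x" using Suc by simp
      have s: "st (Suc n) = snd (mp_step \<pi> (st n))" using st_def by simp
      define k where "k = fst (mp_step \<pi> (st n))"
      define s' where "s' = snd (mp_step \<pi> (st n))"
      have F: "(k < enat x \<longrightarrow> s' x = st n x) \<and> (k = enat x \<longrightarrow> st n x = 1 \<and> s' x = \<pi> x) \<and>
         (enat x < k \<longrightarrow> 1 < st n x \<and> s' x = st n x - 1)"
        unfolding k_def s'_def by (rule step_facts[OF v x])
      have vx: "1 \<le> st n x \<and> st n x \<le> \<pi> x" using Suc x by blast
      have px: "1 \<le> \<pi> x" using periods[OF x] .
      have "k < enat x \<or> k = enat x \<or> enat x < k" by (rule linorder_less_linear)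
      then have "1 \<le> s' x \<and> s' x \<le> \<pi> x"
      proof (elim disjE)
        assume "k < enat x" then show ?thesis using F vx by simp
      next
        assume "k = enat x" then show ?thesis using F px by simp
      next
        assume "enat x < k" then have "1 < st n x \<and> s' x = st n x - 1" using F by simp
        then show ?thesis using vx by linarith
      qed
      then show "1 \<le> st (Suc n) x \<and> st (Suc n) x \<le> \<pi> x" unfolding s s'_def .
    qed
  qed
  define P where "P = pot \<pi> r (r - 1)"
  have rr: "r - (r - 1) = 1" using r by simp
  have dec: "(\<forall>t. 1 \<le> t \<and> t \<le> n \<longrightarrow> mp_seq \<pi> \<sigma> t \<noteq> enat r) \<longrightarrow> P (st n) \<le> P \<sigma> - real n" for n
  proof (induction n)
    case 0
    then show ?case using st_def by simp
  next
    case (Suc n)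
    show ?case
    proof
      assume a: "\<forall>t. 1 \<le> t \<and> t \<le> Suc n \<longrightarrow> mp_seq \<pi> \<sigma> t \<noteq> enat r"
      then have ih: "P (st n) \<le> P \<sigma> - real n" using Suc by auto
      have kr: "fst (mp_step \<pi> (st n)) \<noteq> enat r" using a[rule_format, of "Suc n"]
        unfolding mp_seq_def st_def by simp
      have v: "\<forall>x\<ge>1. 1 \<le> st n x" using valid by simp
      have rl: "r - 1 < r" using r by simp
      note ps = pot_step[OF valid step_facts[OF v] big rl]
      have "P (snd (mp_step \<pi> (st n))) \<le> P (st n) - 1"
        using ps kr rr step_ge1[of \<pi> "st n"] unfolding P_def by simp
      then have "P (st (Suc n)) \<le> P (st n) - 1" using st_def by simp
      then show "P (st (Suc n)) \<le> P \<sigma> - real (Suc n)" using ih by simp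
    qed
  qed
  have pos: "1 \<le> P (st n)" for n
  proof -
    have v: "\<forall>x\<ge>1. 1 \<le> st n x" using valid by simp
    have rl: "r - 1 < r" using r by simp
    show ?thesis using pot_step[OF valid step_facts[OF v] big rl] unfolding P_def by blast
  qed
  define S where "S = {t. 1 \<le> t \<and> mp_seq \<pi> \<sigma> t = enat r}"
  have ub: "real n \<le> P \<sigma> - 1" if "\<forall>t. 1 \<le> t \<and> t \<le> n \<longrightarrow> mp_seq \<pi> \<sigma> t \<noteq> enat r" for n
    using dec[of n] that pos[of n] by simp
  define N where "N = nat (ceiling (P \<sigma>))"
  have "\<not> (\<forall>t. 1 \<le> t \<and> t \<le> N \<longrightarrow> mp_seq \<pi> \<sigma> t \<noteq> enat r)"
  proof
    assume "\<forall>t. 1 \<le> t \<and> t \<le> N \<longrightarrow> mp_seq \<pi> \<sigma> t \<noteq> enat r"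
    then have "real N \<le> P \<sigma> - 1" by (rule ub)
    moreover have "P \<sigma> \<le> real N" unfolding N_def by (rule real_nat_ceiling_ge)
    ultimately show False by simp
  qed
  then have ne: "\<exists>t. t \<in> S" unfolding S_def by auto
  define n where "n = (LEAST t. t \<in> S)"
  have nS: "n \<in> S" unfolding n_def using ne by (rule LeastI_ex)
  have nmin: "\<And>t. t \<in> S \<Longrightarrow> n \<le> t" unfolding n_def by (rule Least_le)
  have w: "mp_wait \<pi> \<sigma> r = enat n"
    unfolding mp_wait_def S_def[symmetric] using nS nmin by (rule enat_Inf_Least)
  have "\<forall>t. 1 \<le> t \<and> t \<le> n - 1 \<longrightarrow> mp_seq \<pi> \<sigma> t \<noteq> enat r"
  proof (intro allI impI)
    fix t assume "1 \<le> t \<and> t \<le> n - 1"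
    then have "t < n" "1 \<le> t" using nS S_def by auto
    then show "mp_seq \<pi> \<sigma> t \<noteq> enat r" using nmin[of t] S_def by auto
  qed
  then have "real (n - 1) \<le> P \<sigma> - 1" by (rule ub)
  then have "real n \<le> P \<sigma>" using nS S_def by (simp add: of_nat_diff)
  moreover have "P \<sigma> \<le> mp_wbar \<pi> r" unfolding P_def mp_wbar_def
    using pot_bound[of \<sigma> \<pi> r "r - 1"] seeds big r by auto
  ultimately show ?thesis using w by auto
qed

end
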